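(* Let $k\ge 2$ and $n_1,\dots,n_k\ge 1$, let $n=n_1+\cdots+n_k$, and let $\Gamma=K_{1,k-1}[K_{n_1},K_{n_2},\dots,K_{n_k}]$, where $K_{n_1}$ replaces the center of the star $K_{1,k-1}$ and $K_{n_2},\dots,K_{n_k}$ replace its leaves. Put $d_1=n-1$ and $d_i=n_1+n_i-1$ for $2\le i\le k$. Then \[\chi(S(\Gamma),x)=\prod_{i=1}^{k}\left(x+\sqrt{2}d_i\right)^{n_i-1}\left(\prod_{i=1}^{k}\big(x-(n_i-1)\sqrt{2}d_i\big)-\sum_{j=2}^{k}n_1n_j(d_1^2+d_j^2)\prod_{\substack{2\le i\le k\\ i\neq j}}\big(x-(n_i-1)\sqrt{2}d_i\big)\right),\] where $\chi(M,x)=\det(xI-M)$ and $S(\Gamma)$ is the Sombor matrix of $\Gamma$.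
   Context: All graphs are finite, simple and undirected. For a graph $\Gamma$ with vertices $u_1,\dots,u_m$, the Sombor matrix $S(\Gamma)$ is the $m\times m$ matrix whose $(i,j)$ entry is $\sqrt{\deg(u_i)^2+\deg(u_j)^2}$ if $u_i$ and $u_j$ are adjacent and $0$ otherwise. $K_r$ is the complete graph on $r$ vertices and $K_{1,k-1}$ is the star with center $u_1$ and leaves $u_2,\dots,u_k$. For a graph $H$ with vertices $u_1,\dots,u_k$ and pairwise disjoint graphs $\Gamma_1,\dots,\Gamma_k$, the generalized join $H[\Gamma_1,\dots,\Gamma_k]$ is obtained by replacing each $u_i$ by $\Gamma_i$ and joining every vertex of $\Gamma_i$ to every vertex of $\Gamma_j$ whenever $u_i$ is adjacent to $u_j$ in $H$. *)

theory Defs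
  imports Complex_Main "Jordan_Normal_Form.Char_Poly"
begin

text \<open>A finite simple graph on the vertex set {0..<m} is given by a (symmetric,
irreflexive) adjacency predicate E.\<close>

definition gdeg :: "nat \<Rightarrow> (nat \<Rightarrow> nat \<Rightarrow> bool) \<Rightarrow> nat \<Rightarrow> nat" where
  "gdeg m E u = card {v. v < m \<and> E u v}"

definition sombor_matrix :: "nat \<Rightarrow> (nat \<Rightarrow> nat \<Rightarrow> bool) \<Rightarrow> real mat" where
  "sombor_matrix m E = mat m m (\<lambda>(i, j). if E i j
      then sqrt (real (gdeg m E i) ^ 2 + real (gdeg m E j) ^ 2) else 0)"

definition chi :: "real mat \<Rightarrow> real \<Rightarrow> real" where
  "chi M x = poly (char_poly M) x"

definition complete_adj :: "nat \<Rightarrow> nat \<Rightarrow> bool" where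
  "complete_adj a b = (a \<noteq> b)"

definition star_adj :: "nat \<Rightarrow> nat \<Rightarrow> nat \<Rightarrow> bool" where
  "star_adj k i j = (i \<in> {1..k} \<and> j \<in> {1..k} \<and> i \<noteq> j \<and> (i = 1 \<or> j = 1))"

text \<open>Generalized join H[Gamma_1,...,Gamma_k]: block i (1 \<le> i \<le> k) consists of
the ns i consecutive vertices offset i, ..., offset i + ns i - 1.\<close>
definition block_offset :: "(nat \<Rightarrow> nat) \<Rightarrow> nat \<Rightarrow> nat" where
  "block_offset ns i = (\<Sum>l\<in>{1..<i}. ns l)"

definition block_of :: "(nat \<Rightarrow> nat) \<Rightarrow> nat \<Rightarrow> nat" where
  "block_of ns u = (LEAST i. u < block_offset ns (Suc i))"

definition local_idx :: "(nat \<Rightarrow> nat) \<Rightarrow> nat \<Rightarrow> nat" where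
  "local_idx ns u = u - block_offset ns (block_of ns u)"

definition gen_join :: "(nat \<Rightarrow> nat \<Rightarrow> bool) \<Rightarrow> (nat \<Rightarrow> nat) \<Rightarrow> (nat \<Rightarrow> nat \<Rightarrow> nat \<Rightarrow> bool)
    \<Rightarrow> nat \<Rightarrow> nat \<Rightarrow> bool" where
  "gen_join H ns G u v =
     (if block_of ns u = block_of ns v
      then G (block_of ns u) (local_idx ns u) (local_idx ns v)
      else H (block_of ns u) (block_of ns v))"

end

theory Submission imports Defs begin

definition ins :: "nat \<Rightarrow> nat \<Rightarrow> nat" where
  "ins q v = (if v < q then v else Suc v)"

lemma ins_image: assumes q: "q < N" shows "ins q ` {..<N-1} = {..<N} - {q}"
proof
  show "ins q ` {..<N-1} \<subseteq> {..<N} - {q}"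
    using q by (auto simp: ins_def)
next
  show "{..<N} - {q} \<subseteq> ins q ` {..<N-1}"
  proof
  fix u assume a0: "u \<in> {..<N} - {q}"
  note a = q a0
  show "u \<in> ins q ` {..<N-1}"
  proof (cases "u < q")
    case True then show ?thesis using a by (intro image_eqI[of _ _ u]) (auto simp: ins_def)
  next
    case False then show ?thesis using a by (intro image_eqI[of _ _ "u - 1"]) (auto simp: ins_def)
  qed
  qed
qed

lemma ins_inj: "inj (ins q)"
  by (auto simp: inj_def ins_def split: if_splits)

lemma sum_ins: fixes f :: "nat \<Rightarrow> 'a::comm_monoid_add"
  assumes "q < N" shows "(\<Sum>u<N. f u) = f q + (\<Sum>v<N-1. f (ins q v))"
proof -
  have "(\<Sum>u<N. f u) = f q + sum f ({..<N} - {q})"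
    using assms by (simp add: sum.remove)
  also have "sum f ({..<N} - {q}) = (\<Sum>v<N-1. f (ins q v))"
    using sum.reindex[of "ins q" "{..<N-1}" f] ins_inj[of q] ins_image[OF assms]
    by (simp add: inj_on_def inj_def)
  finally show ?thesis .
qed

definition gmat :: "nat \<Rightarrow> (nat\<Rightarrow>nat) \<Rightarrow> (nat\<Rightarrow>real) \<Rightarrow> (nat\<Rightarrow>real) \<Rightarrow> (nat\<Rightarrow>nat\<Rightarrow>real) \<Rightarrow> real mat" where
  "gmat N b w \<alpha> W = mat N N (\<lambda>(u,v). (if u = v then \<alpha> (b u) else 0) - w v * W (b u) (b v))"

definition hmat :: "nat \<Rightarrow> nat \<Rightarrow> (nat\<Rightarrow>nat) \<Rightarrow> (nat\<Rightarrow>real) \<Rightarrow> (nat\<Rightarrow>real) \<Rightarrow> (nat\<Rightarrow>nat\<Rightarrow>real) \<Rightarrow> real mat" where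
  "hmat K N b w \<alpha> W = mat K K (\<lambda>(i,j). (if i = j then \<alpha> i else 0) - W i j * (\<Sum>u<N. if b u = j then w u else 0))"

definition cnt :: "nat \<Rightarrow> (nat \<Rightarrow> nat) \<Rightarrow> nat \<Rightarrow> nat" where
  "cnt N b i = (\<Sum>u<N. if b u = i then 1 else 0)"

lemma det_row_single:
  assumes A: "(A :: 'a :: comm_ring_1 mat) \<in> carrier_mat n n" and i: "i < n" and j: "j < n"
    and z: "\<And>l. l < n \<Longrightarrow> l \<noteq> j \<Longrightarrow> A $$ (i,l) = 0"
  shows "det A = A $$ (i,j) * cofactor A i j"
proof -
  have "det A = (\<Sum>l<n. A $$ (i,l) * cofactor A i l)" by (rule laplace_expansion_row[OF A i])
  also have "\<dots> = A $$ (i,j) * cofactor A i j"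
  proof -
    have "(\<Sum>l<n. A $$ (i,l) * cofactor A i l) = A $$ (i,j) * cofactor A i j + (\<Sum>l\<in>{..<n}-{j}. A $$ (i,l) * cofactor A i l)"
      using j by (intro sum.remove) auto
    also have "(\<Sum>l\<in>{..<n}-{j}. A $$ (i,l) * cofactor A i l) = 0"
      using z by (intro sum.neutral) auto
    finally show ?thesis by simp
  qed
  finally show ?thesis .
qed

lemma det_col_single:
  assumes A: "(A :: 'a :: comm_ring_1 mat) \<in> carrier_mat n n" and i: "i < n" and j: "j < n"
    and z: "\<And>l. l < n \<Longrightarrow> l \<noteq> i \<Longrightarrow> A $$ (l,j) = 0"
  shows "det A = A $$ (i,j) * cofactor A i j"
proof -
  have "det A = (\<Sum>l<n. A $$ (l,j) * cofactor A l j)" by (rule laplace_expansion_column[OF A j])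
  also have "\<dots> = A $$ (i,j) * cofactor A i j"
  proof -
    have "(\<Sum>l<n. A $$ (l,j) * cofactor A l j) = A $$ (i,j) * cofactor A i j + (\<Sum>l\<in>{..<n}-{i}. A $$ (l,j) * cofactor A l j)"
      using i by (intro sum.remove) auto
    also have "(\<Sum>l\<in>{..<n}-{i}. A $$ (l,j) * cofactor A l j) = 0"
      using z by (intro sum.neutral) auto
    finally show ?thesis by simp
  qed
  finally show ?thesis .
qed

lemma gen_det:
  assumes "\<forall>u v. u \<le> v \<longrightarrow> v < N \<longrightarrow> b u \<le> b v" and "b ` {..<N} = {..<K}"
  shows "det (gmat N b w \<alpha> W) = (\<Prod>i<K. \<alpha> i ^ (cnt N b i - 1)) * det (hmat K N b w \<alpha> W)"
  using assms
proof (induction N arbitrary: b w rule: less_induct)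
  case (less N)
  show ?case
  proof (cases "\<exists>p. Suc p < N \<and> b p = b (Suc p)")
    case False
    have st: "b p < b (Suc p)" if "Suc p < N" for p
    proof -
      have "b p \<le> b (Suc p)" using less.prems(1) that by simp
      with False that show ?thesis by (auto simp: order.order_iff_strict)
    qed
    have grow: "b u + (v - u) \<le> b v" if "u \<le> v" "v < N" for u v
      using that
    proof (induction v)
      case 0 then show ?case by simp
    next
      case (Suc v)
      show ?case
      proof (cases "u = Suc v")
        case True then show ?thesis by simp
      next
        case False
        then have "u \<le> v" using Suc.prems by simp
        with Suc.IH Suc.prems have "b u + (v - u) \<le> b v" by simp
        moreover have "b v < b (Suc v)" using st Suc.prems by simp
        ultimately show ?thesis using \<open>u \<le> v\<close> by linarith
      qed
    qed
    have KN: "K \<le> N"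
    proof -
      have "card (b ` {..<N}) \<le> card {..<N}" by (rule card_image_le) simp
      then show ?thesis using less.prems(2) by simp
    qed
    have bid: "b u = u" if "u < N" for u
    proof -
      have "b 0 + (u - 0) \<le> b u" using grow[of 0 u] that by simp
      then have 1: "u \<le> b u" by simp
      have "b u + (N - 1 - u) \<le> b (N - 1)" using grow[of u "N-1"] that by simp
      moreover have "b (N - 1) \<in> {..<K}" using less.prems(2) that by auto
      ultimately have "b u \<le> u" using KN that by auto
      with 1 show ?thesis by simp
    qed
    have "{..<N} = b ` {..<N}" using bid by (auto simp: image_iff)
    then have NK: "N = K" using less.prems(2) by (metis card_lessThan)
    have S: "(\<Sum>u<N. if b u = j then w u else 0) = w j" if "j < N" for j
    proof -
      have "(\<Sum>u<N. if b u = j then w u else 0) = (\<Sum>u<N. if u = j then w u else 0)"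
        by (rule sum.cong) (auto simp: bid)
      also have "\<dots> = w j" using that by simp
      finally show ?thesis .
    qed
    have C: "cnt N b i = 1" if "i < N" for i
    proof -
      have "cnt N b i = (\<Sum>u<N. if u = i then 1 else 0)"
        unfolding cnt_def by (rule sum.cong) (auto simp: bid)
      also have "\<dots> = 1" using that by simp
      finally show ?thesis .
    qed
    have "gmat N b w \<alpha> W = hmat K N b w \<alpha> W"
      by (rule eq_matI) (auto simp: gmat_def hmat_def S bid NK[symmetric])
    moreover have "(\<Prod>i<K. \<alpha> i ^ (cnt N b i - 1)) = 1"
      by (rule prod.neutral) (auto simp: C NK[symmetric])
    ultimately show ?thesis by simp
  next
    case True
    then obtain p where pN: "Suc p < N" and bp: "b p = b (Suc p)" by blast
    define q where "q = Suc p"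
    have qN: "q < N" and pq: "p < q" and bpq: "b p = b q" using pN bp by (auto simp: q_def)
    define G where "G = gmat N b w \<alpha> W"
    define A1 where "A1 = addrow (-1) q p G"
    define A2 where "A2 = addcol 1 p q A1"
    have G: "G \<in> carrier_mat N N" by (simp add: G_def gmat_def)
    have A1: "A1 \<in> carrier_mat N N" using G by (simp add: A1_def)
    have A2: "A2 \<in> carrier_mat N N" unfolding A2_def using A1 by (intro carrier_matI) (auto dest: carrier_matD)
    have "det A1 = det G" unfolding A1_def by (rule det_addrow) (use pq pN G in auto)
    moreover have "det A2 = det A1" unfolding A2_def by (rule det_addcol) (use pq qN A1 in auto)
    ultimately have dG: "det G = det A2" by simp
    have ent: "A2 $$ (r,c) = (if r = q then (if c = q then \<alpha> (b q) else 0) else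
       (if r = c then \<alpha> (b r) else 0) - (w c + (if c = p then w q else 0)) * W (b r) (b c))"
      if "r < N" "c < N" for r c
    proof -
      have g: "G $$ (i,j) = (if i = j then \<alpha> (b i) else 0) - w j * W (b i) (b j)" if "i < N" "j < N" for i j
        using that by (simp add: G_def gmat_def)
      have a1: "A1 $$ (i,j) = (if i = q then G $$ (i,j) - G $$ (p,j) else G $$ (i,j))" if "i < N" "j < N" for i j
        using that G by (simp add: A1_def)
      have a2: "A2 $$ (r,c) = (if c = p then A1 $$ (r,q) + A1 $$ (r,c) else A1 $$ (r,c))"
        using that A1 by (simp add: A2_def)
      show ?thesis
        unfolding a2 using that qN pq pN bpq by (simp add: a1 g algebra_simps)
    qed
    have "det A2 = A2 $$ (q,q) * cofactor A2 q q"
      by (rule det_row_single[OF A2 qN qN]) (simp add: ent qN)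
    also have "cofactor A2 q q = det (mat_delete A2 q q)"
    proof -
      have "(-1::real) ^ (q + q) = 1" by (simp add: mult_2[symmetric] power_mult)
      then show ?thesis by (simp add: cofactor_def)
    qed
    finally have dA2: "det A2 = \<alpha> (b q) * det (mat_delete A2 q q)" by (simp add: ent qN)
    define b' where "b' = b \<circ> ins q"
    define w' where "w' = (\<lambda>v. w (ins q v) + (if v = p then w q else 0))"
    have insq: "ins q p = p" using pq by (simp add: ins_def)
    have md: "mat_delete A2 q q = gmat (N-1) b' w' \<alpha> W"
    proof (rule eq_matI)
      fix i j assume i: "i < dim_row (gmat (N-1) b' w' \<alpha> W)" and j: "j < dim_col (gmat (N-1) b' w' \<alpha> W)"
      have ii: "ins q i < N" "ins q i \<noteq> q" "ins q j < N" using i j by (auto simp: gmat_def ins_def)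
      have "mat_delete A2 q q $$ (i,j) = A2 $$ (ins q i, ins q j)"
        using i j A2 by (simp add: mat_delete_def gmat_def ins_def)
      also have "\<dots> = gmat (N-1) b' w' \<alpha> W $$ (i,j)"
      proof -
        have e1: "(ins q i = ins q j) = (i = j)" using ins_inj[of q] by (auto simp: inj_def)
        have e2: "(ins q j = p) = (j = p)" using pq by (auto simp: ins_def)
        have gm: "gmat (N-1) b' w' \<alpha> W $$ (i,j) = (if i = j then \<alpha> (b' i) else 0) - w' j * W (b' i) (b' j)"
          using i j by (simp add: gmat_def)
        show ?thesis unfolding ent[OF ii(1) ii(3)] gm using ii(2) e1 e2
          by (simp add: b'_def w'_def)
      qed
      finally show "mat_delete A2 q q $$ (i,j) = gmat (N-1) b' w' \<alpha> W $$ (i,j)" .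
    qed (use A2 in \<open>auto simp: gmat_def\<close>)
    have mono': "\<forall>u v. u \<le> v \<longrightarrow> v < N - 1 \<longrightarrow> b' u \<le> b' v"
    proof (intro allI impI)
      fix u v assume uv: "u \<le> v" "v < N - 1"
      have "ins q u \<le> ins q v" "ins q v < N" using uv by (auto simp: ins_def)
      then show "b' u \<le> b' v" using less.prems(1) by (simp add: b'_def)
    qed
    have img': "b' ` {..<N-1} = {..<K}"
    proof -
      have "b' ` {..<N-1} = b ` (ins q ` {..<N-1})" unfolding b'_def by (rule image_comp[symmetric])
      also have "\<dots> = b ` ({..<N} - {q})" using ins_image[OF qN] by simp
      also have "\<dots> = b ` {..<N}"
      proof
        show "b ` {..<N} \<subseteq> b ` ({..<N} - {q})"
        proof
          fix y assume "y \<in> b ` {..<N}"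
          then obtain u where u: "u < N" "y = b u" by auto
          show "y \<in> b ` ({..<N} - {q})"
          proof (cases "u = q")
            case True then show ?thesis using u bpq pq qN by (intro image_eqI[of _ _ p]) auto
          next
            case False then show ?thesis using u by auto
          qed
        qed
      qed auto
      finally show ?thesis using less.prems(2) by simp
    qed
    have IH: "det (gmat (N-1) b' w' \<alpha> W) = (\<Prod>i<K. \<alpha> i ^ (cnt (N-1) b' i - 1)) * det (hmat K (N-1) b' w' \<alpha> W)"
      using less.IH[of "N-1" b' w'] qN mono' img' by simp
    have Seq: "(\<Sum>v<N-1. if b' v = j then w' v else 0) = (\<Sum>u<N. if b u = j then w u else 0)" for j
    proof -
      have "(\<Sum>v<N-1. if b' v = j then w' v else 0) =
        (\<Sum>v<N-1. (if b (ins q v) = j then w (ins q v) else 0) + (if v = p then (if b q = j then w q else 0) else 0))"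
        by (rule sum.cong) (auto simp: b'_def w'_def insq bpq)
      also have "\<dots> = (\<Sum>v<N-1. (if b (ins q v) = j then w (ins q v) else 0)) + (if b q = j then w q else 0)"
      proof -
        have pN1: "p \<in> {..<N-1}" using pN by simp
        show ?thesis using pN1 by (simp add: sum.distrib q_def)
      qed
      also have "\<dots> = (\<Sum>u<N. if b u = j then w u else 0)"
        using sum_ins[OF qN, of "\<lambda>u. if b u = j then w u else 0"] by simp
      finally show ?thesis .
    qed
    have H: "hmat K (N-1) b' w' \<alpha> W = hmat K N b w \<alpha> W"
      by (simp only: hmat_def Seq)
    have cn: "cnt N b i = (if b q = i then 1 else 0) + cnt (N-1) b' i" for i
      unfolding cnt_def using sum_ins[OF qN, of "\<lambda>u. if b u = i then 1 else (0::nat)"] by (simp add: b'_def)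
    have cpos: "cnt (N-1) b' (b q) \<ge> 1"
    proof -
      have "cnt (N-1) b' (b q) = (if b' p = b q then 1 else 0) + (\<Sum>v\<in>{..<N-1}-{p}. if b' v = b q then 1 else 0)"
        unfolding cnt_def using pN q_def by (intro sum.remove) auto
      then show ?thesis by (simp add: b'_def insq bpq)
    qed
    have bqK: "b q \<in> {..<K}" using less.prems(2) qN by auto
    obtain m where cm: "cnt (N-1) b' (b q) = Suc m" using cpos by (cases "cnt (N-1) b' (b q)") auto
    have P: "(\<Prod>i<K. \<alpha> i ^ (cnt N b i - 1)) = \<alpha> (b q) * (\<Prod>i<K. \<alpha> i ^ (cnt (N-1) b' i - 1))"
    proof -
      have e1: "(\<Prod>i<K. \<alpha> i ^ (cnt N b i - 1)) = \<alpha> (b q) ^ (cnt N b (b q) - 1) * (\<Prod>i\<in>{..<K}-{b q}. \<alpha> i ^ (cnt N b i - 1))"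
        using bqK by (intro prod.remove) auto
      have e2: "(\<Prod>i\<in>{..<K}-{b q}. \<alpha> i ^ (cnt N b i - 1)) = (\<Prod>i\<in>{..<K}-{b q}. \<alpha> i ^ (cnt (N-1) b' i - 1))"
        by (rule prod.cong) (auto simp: cn)
      have e3: "\<alpha> (b q) ^ (cnt N b (b q) - 1) = \<alpha> (b q) * \<alpha> (b q) ^ (cnt (N-1) b' (b q) - 1)"
        unfolding cn cm by simp
      have e4: "(\<Prod>i<K. \<alpha> i ^ (cnt (N-1) b' i - 1)) = \<alpha> (b q) ^ (cnt (N-1) b' (b q) - 1) * (\<Prod>i\<in>{..<K}-{b q}. \<alpha> i ^ (cnt (N-1) b' i - 1))"
        using bqK by (intro prod.remove) auto
      show ?thesis unfolding e1 e2 e3 e4 by (simp only: mult.assoc)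
    qed
    have "det (gmat N b w \<alpha> W) = \<alpha> (b q) * det (gmat (N-1) b' w' \<alpha> W)"
      unfolding G_def[symmetric] dG dA2 md ..
    also have "\<dots> = \<alpha> (b q) * ((\<Prod>i<K. \<alpha> i ^ (cnt (N-1) b' i - 1)) * det (hmat K N b w \<alpha> W))"
      unfolding IH H ..
    also have "\<dots> = (\<Prod>i<K. \<alpha> i ^ (cnt N b i - 1)) * det (hmat K N b w \<alpha> W)"
      unfolding P by (simp only: mult.assoc)
    finally show ?thesis .
  qed
qed



definition arrow :: "nat \<Rightarrow> (nat\<Rightarrow>real) \<Rightarrow> (nat\<Rightarrow>real) \<Rightarrow> (nat\<Rightarrow>real) \<Rightarrow> real mat" where
  "arrow K \<beta> r c = mat K K (\<lambda>(i,j). if i = j then \<beta> i else if i = 0 then r j else if j = 0 then c i else 0)"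

lemma det_diag_shift:
  "det (mat n n (\<lambda>(i,j). if i = j then f i else 0)) = (\<Prod>i<n. (f i :: real))"
proof -
  have "det (mat n n (\<lambda>(i,j). if i = j then f i else 0)) = prod_list (diag_mat (mat n n (\<lambda>(i,j). if i = j then f i else 0)))"
    by (rule det_upper_triangular[of _ n]) (auto simp: upper_triangular_def)
  also have "\<dots> = (\<Prod>i<n. f i)" by (simp add: prod_list_diag_prod atLeast0LessThan)
  finally show ?thesis .
qed

lemma det_arrow:
  "det (arrow K \<beta> r c) = (\<Prod>i<K. \<beta> i) - (\<Sum>j\<in>{1..<K}. r j * c j * (\<Prod>i\<in>{1..<K}-{j}. \<beta> i))"
proof (induction K)
  case 0
  then show ?case by (simp add: arrow_def)
next
  case (Suc K)
  show ?case
  proof (cases "K = 0")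
    case True
    then show ?thesis by (subst det_single) (auto simp: arrow_def)
  next
    case False
    define A where "A = arrow (Suc K) \<beta> r c"
    have A: "A \<in> carrier_mat (Suc K) (Suc K)" by (simp add: A_def arrow_def)
    have Arow: "A $$ (K,l) = (if l = K then \<beta> K else 0) + (if l = 0 then c K else 0)" if "l < Suc K" for l
      using that False by (simp add: A_def arrow_def)
    have "det A = (\<Sum>l<Suc K. A $$ (K,l) * cofactor A K l)"
      by (rule laplace_expansion_row[OF A]) simp
    also have "\<dots> = (\<Sum>l<Suc K. (if l = K then \<beta> K * cofactor A K K else 0) + (if l = 0 then c K * cofactor A K 0 else 0))"
      by (rule sum.cong) (auto simp: Arow algebra_simps)
    also have "\<dots> = \<beta> K * cofactor A K K + c K * cofactor A K 0"
      by (simp add: sum.distrib)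
    finally have d1: "det A = \<beta> K * cofactor A K K + c K * cofactor A K 0" .
    have "mat_delete A K K = arrow K \<beta> r c"
      by (rule eq_matI) (auto simp: A_def arrow_def mat_delete_def)
    moreover have "(-1::real) ^ (K + K) = 1" by (simp add: mult_2[symmetric] power_mult)
    ultimately have cKK: "cofactor A K K = det (arrow K \<beta> r c)" by (simp add: cofactor_def)
    define B where "B = mat_delete A K 0"
    have B: "B \<in> carrier_mat K K" using A by (simp add: B_def mat_delete_def)
    have Bent: "B $$ (i,j) = A $$ (i, Suc j)" if "i < K" "j < K" for i j
      using that A by (simp add: B_def mat_delete_def)
    have K1: "K - 1 < K" using False by simp
    have "det B = B $$ (0, K-1) * cofactor B 0 (K-1)"
      by (rule det_col_single[OF B]) (use False in \<open>auto simp: Bent A_def arrow_def\<close>)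
    also have "B $$ (0, K-1) = r K" using False by (simp add: Bent A_def arrow_def)
    also have "mat_delete B 0 (K-1) = mat (K-1) (K-1) (\<lambda>(i,j). if i = j then \<beta> (Suc i) else 0)"
      by (rule eq_matI) (use B in \<open>auto simp: mat_delete_def Bent A_def arrow_def\<close>)
    hence "cofactor B 0 (K-1) = (-1)^(K-1) * (\<Prod>i<K-1. \<beta> (Suc i))"
      by (simp add: cofactor_def det_diag_shift)
    finally have dB: "det B = r K * ((-1)^(K-1) * (\<Prod>i<K-1. \<beta> (Suc i)))" .
    obtain m where Km: "K = Suc m" using False by (cases K) auto
    have P: "(\<Prod>i<K-1. \<beta> (Suc i)) = (\<Prod>i\<in>{1..<K}. \<beta> i)"
    proof -
      have "(\<Prod>i\<in>{1..<K}. \<beta> i) = (\<Prod>i\<in>{0..<m}. \<beta> (Suc i))"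
        unfolding Km One_nat_def by (rule prod.shift_bounds_Suc_ivl)
      then show ?thesis by (simp add: Km atLeast0LessThan)
    qed
    have sg: "(-1::real)^K * (-1)^(K-1) = -1"
    proof -
      have "(-1::real)^K * (-1)^(K-1) = (-1)^(Suc (2*m))" by (simp add: Km power_add[symmetric] mult_2)
      also have "\<dots> = -1" by simp
      finally show ?thesis .
    qed
    have "cofactor A K 0 = (-1)^K * det B" by (simp add: cofactor_def B_def)
    also have "\<dots> = r K * (\<Prod>i\<in>{1..<K}. \<beta> i) * ((-1)^K * (-1)^(K-1))"
      unfolding dB P by (simp only: ac_simps)
    finally have cK0: "cofactor A K 0 = - r K * (\<Prod>i\<in>{1..<K}. \<beta> i)" unfolding sg by simp
    have "det A = \<beta> K * det (arrow K \<beta> r c) - r K * c K * (\<Prod>i\<in>{1..<K}. \<beta> i)"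
      using d1 cKK cK0 by simp
    also have "\<dots> = (\<Prod>i<Suc K. \<beta> i) - (\<Sum>j\<in>{1..<Suc K}. r j * c j * (\<Prod>i\<in>{1..<Suc K}-{j}. \<beta> i))"
    proof -
      have s1: "{1..<Suc K} = insert K {1..<K}" using False by auto
      have s2: "{1..<Suc K}-{j} = insert K ({1..<K}-{j})" if "j \<in> {1..<K}" for j using that by auto
      have "(\<Sum>j\<in>{1..<Suc K}. r j * c j * (\<Prod>i\<in>{1..<Suc K}-{j}. \<beta> i)) =
          r K * c K * (\<Prod>i\<in>{1..<Suc K}-{K}. \<beta> i) + (\<Sum>j\<in>{1..<K}. r j * c j * (\<Prod>i\<in>{1..<Suc K}-{j}. \<beta> i))"
        unfolding s1 by simp
      also have "{1..<Suc K}-{K} = {1..<K}" by auto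
      also have "(\<Sum>j\<in>{1..<K}. r j * c j * (\<Prod>i\<in>{1..<Suc K}-{j}. \<beta> i)) = \<beta> K * (\<Sum>j\<in>{1..<K}. r j * c j * (\<Prod>i\<in>{1..<K}-{j}. \<beta> i))"
        unfolding sum_distrib_left
      proof (rule sum.cong[OF refl])
        fix j assume j: "j \<in> {1..<K}"
        have "(\<Prod>i\<in>{1..<Suc K}-{j}. \<beta> i) = \<beta> K * (\<Prod>i\<in>{1..<K}-{j}. \<beta> i)"
          unfolding s2[OF j] by (subst prod.insert) auto
        then show "r j * c j * (\<Prod>i\<in>{1..<Suc K}-{j}. \<beta> i) = \<beta> K * (r j * c j * (\<Prod>i\<in>{1..<K}-{j}. \<beta> i))"
          by simp
      qed
      finally have X: "(\<Sum>j\<in>{1..<Suc K}. r j * c j * (\<Prod>i\<in>{1..<Suc K}-{j}. \<beta> i)) =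
        r K * c K * (\<Prod>i\<in>{1..<K}. \<beta> i) + \<beta> K * (\<Sum>j\<in>{1..<K}. r j * c j * (\<Prod>i\<in>{1..<K}-{j}. \<beta> i))" .
      show ?thesis unfolding X Suc.IH prod.lessThan_Suc by (simp add: algebra_simps)
    qed
    finally show ?thesis by (simp add: A_def)
  qed
qed



lemma off_Suc: "1 \<le> i \<Longrightarrow> block_offset ns (Suc i) = block_offset ns i + ns i"
  by (simp add: block_offset_def atLeastLessThanSuc)

lemma off_mono: "i \<le> j \<Longrightarrow> block_offset ns i \<le> block_offset ns j"
  unfolding block_offset_def by (rule sum_mono2) auto

lemma off_1: "block_offset ns (Suc 0) = 0"
  by (simp add: block_offset_def)

lemma bo_eq: "block_offset ns i \<le> u \<Longrightarrow> u < block_offset ns (Suc i) \<Longrightarrow> block_of ns u = i"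
  unfolding block_of_def
proof (rule Least_equality)
  fix j assume a: "block_offset ns i \<le> u" and j: "u < block_offset ns (Suc j)"
  show "i \<le> j"
  proof (rule ccontr)
    assume "\<not> i \<le> j"
    then have "block_offset ns (Suc j) \<le> block_offset ns i" by (intro off_mono) simp
    with a j show False by simp
  qed
qed

lemma bo_range:
  assumes u: "u < block_offset ns (Suc k)"
  shows "1 \<le> block_of ns u \<and> block_of ns u \<le> k \<and> block_offset ns (block_of ns u) \<le> u
     \<and> u < block_offset ns (Suc (block_of ns u))"
proof -
  define P where "P = (\<lambda>j. u < block_offset ns (Suc j))"
  have bo: "block_of ns u = Least P" by (simp add: block_of_def P_def)
  have Pk: "P k" using u by (simp add: P_def)
  have 1: "P (Least P)" using Pk by (rule LeastI)
  have 2: "Least P \<le> k" using Pk by (rule Least_le)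
  have 3: "Least P \<noteq> 0"
  proof
    assume "Least P = 0"
    with 1 have "P 0" by simp
    then show False by (simp add: P_def off_1)
  qed
  then obtain j where j: "Least P = Suc j" by (cases "Least P") auto
  have "\<not> P j" using j by (intro not_less_Least) simp
  then have "block_offset ns (Suc j) \<le> u" unfolding P_def by simp
  then have 4: "block_offset ns (Least P) \<le> u" using j by simp
  show ?thesis using 1 2 3 4 by (simp add: bo P_def)
qed

lemma sum_if_card: "(\<Sum>u<(n::nat). if P u then 1 else (0::nat)) = card {u. u < n \<and> P u}"
proof -
  have e: "{u. u < n \<and> P u} = {u\<in>{..<n}. P u}" by auto
  have "card {u\<in>{..<n}. P u} = (\<Sum>u\<in>{u\<in>{..<n}. P u}. (1::nat))" by simp
  also have "\<dots> = (\<Sum>u<n. if P u then 1 else 0)" by (rule sum.inter_filter) simp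
  finally have X: "card {u\<in>{..<n}. P u} = (\<Sum>u<n. if P u then 1 else 0)" .
  show ?thesis unfolding e by (rule sym[OF X])
qed

theorem corollary3p5:
  fixes k :: nat and ns :: "nat \<Rightarrow> nat" and x :: real
  assumes "k \<ge> 2"
    and "\<forall>i\<in>{1..k}. ns i \<ge> 1"
  defines "n \<equiv> (\<Sum>i=1..k. ns i)"
  defines "d \<equiv> (\<lambda>i. if i = 1 then real n - 1 else real (ns 1) + real (ns i) - 1)"
  defines "E \<equiv> gen_join (star_adj k) ns (\<lambda>_. complete_adj)"
  shows "chi (sombor_matrix n E) x =
    (\<Prod>i=1..k. (x + sqrt 2 * d i) ^ (ns i - 1)) *
    ((\<Prod>i=1..k. (x - (real (ns i) - 1) * sqrt 2 * d i))
     - (\<Sum>j=2..k. real (ns 1) * real (ns j) * ((d 1)^2 + (d j)^2) *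
          (\<Prod>i\<in>{2..k} - {j}. (x - (real (ns i) - 1) * sqrt 2 * d i))))"
proof -
  define off where "off = block_offset ns"
  define bo where "bo = block_of ns"
  have ns1: "ns i \<ge> 1" if "1 \<le> i" "i \<le> k" for i using assms(2) that by auto
  have nk: "off (Suc k) = n"
    by (simp add: off_def n_def block_offset_def atLeastLessThanSuc_atLeastAtMost)
  have R: "1 \<le> bo u \<and> bo u \<le> k \<and> off (bo u) \<le> u \<and> u < off (Suc (bo u))" if "u < n" for u
    using bo_range[of u ns k] nk that by (simp add: off_def bo_def)
  have offle: "off (Suc i) \<le> n" if "i \<le> k" for i
    using off_mono[of "Suc i" "Suc k" ns] that nk by (simp add: off_def)
  have blk: "(bo u = i) = (off i \<le> u \<and> u < off (Suc i))" if "u < n" for u i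
  proof
    assume "bo u = i" then show "off i \<le> u \<and> u < off (Suc i)" using R[OF that] by simp
  next
    assume "off i \<le> u \<and> u < off (Suc i)" then show "bo u = i" using bo_eq[of ns i u] by (simp add: off_def bo_def)
  qed
  have blkset: "{u. u < n \<and> bo u = i} = {off i..<off (Suc i)}" if "i \<le> k" for i
  proof
    show "{u. u < n \<and> bo u = i} \<subseteq> {off i..<off (Suc i)}"
    proof
      fix u assume a: "u \<in> {u. u < n \<and> bo u = i}"
      then have "u < n" "bo u = i" by auto
      then show "u \<in> {off i..<off (Suc i)}" using blk[of u i] by simp
    qed
    show "{off i..<off (Suc i)} \<subseteq> {u. u < n \<and> bo u = i}"
    proof
      fix u assume a: "u \<in> {off i..<off (Suc i)}"
      then have "u < n" using offle[OF that] by auto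
      then have "bo u = i" using blk[of u i] a by simp
      then show "u \<in> {u. u < n \<and> bo u = i}" using \<open>u < n\<close> by simp
    qed
  qed
  have cardblk: "card {u. u < n \<and> bo u = i} = ns i" if "1 \<le> i" "i \<le> k" for i
    using that by (simp add: blkset off_def off_Suc)
  have n1: "ns 1 \<le> n" unfolding n_def using assms(1) by (intro member_le_sum) auto
  have npos: "1 \<le> n" using n1 ns1[of 1] assms(1) by simp
  have Eiff: "E u v = (u \<noteq> v \<and> (bo u = bo v \<or> bo u = 1 \<or> bo v = 1))" if "u < n" "v < n" for u v
  proof -
    have r1: "1 \<le> bo u" "bo u \<le> k" "off (bo u) \<le> u" using R[OF that(1)] by auto
    have r2: "1 \<le> bo v" "bo v \<le> k" "off (bo v) \<le> v" using R[OF that(2)] by auto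
    have "E u v = (if bo u = bo v then u - off (bo u) \<noteq> v - off (bo v) else star_adj k (bo u) (bo v))"
      by (simp add: E_def gen_join_def local_idx_def complete_adj_def bo_def off_def)
    also have "\<dots> = (u \<noteq> v \<and> (bo u = bo v \<or> bo u = 1 \<or> bo v = 1))"
    proof (cases "bo u = bo v")
      case True
      then have "(u - off (bo u) \<noteq> v - off (bo v)) = (u \<noteq> v)" using r1 r2 by auto
      then show ?thesis using True by simp
    next
      case False
      then have "u \<noteq> v" by auto
      then show ?thesis using False r1 r2 by (auto simp: star_adj_def)
    qed
    finally show ?thesis .
  qed
  have deg: "real (gdeg n E u) = d (bo u)" if u: "u < n" for u
  proof (cases "bo u = 1")
    case True
    have "{v. v < n \<and> E u v} = {..<n} - {u}"
    proof (rule Set.set_eqI)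
      fix v show "v \<in> {v. v < n \<and> E u v} \<longleftrightarrow> v \<in> {..<n} - {u}"
        by (cases "v < n") (auto simp: Eiff[OF u] True)
    qed
    then have "gdeg n E u = n - 1" using u by (simp add: gdeg_def)
    then show ?thesis using True npos by (simp add: d_def)
  next
    case False
    define i where "i = bo u"
    have i: "1 \<le> i" "i \<le> k" "i \<noteq> 1" using R[OF u] False by (auto simp: i_def)
    have "{v. v < n \<and> E u v} = ({v. v < n \<and> bo v = i} \<union> {v. v < n \<and> bo v = 1}) - {u}"
    proof (rule Set.set_eqI)
      fix v
      have bu: "bo u = i" by (simp add: i_def)
      show "v \<in> {v. v < n \<and> E u v} \<longleftrightarrow> v \<in> ({v. v < n \<and> bo v = i} \<union> {v. v < n \<and> bo v = 1}) - {u}"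
      proof (cases "v < n")
        case True
        then show ?thesis using i(3) by (auto simp: Eiff[OF u True] bu)
      qed simp
    qed
    moreover have "card (({v. v < n \<and> bo v = i} \<union> {v. v < n \<and> bo v = 1}) - {u}) = ns i + ns 1 - 1"
    proof -
      have "card ({v. v < n \<and> bo v = i} \<union> {v. v < n \<and> bo v = 1}) = ns i + ns 1"
        using i assms(1) by (subst card_Un_disjoint) (auto simp: cardblk)
      moreover have "u \<in> {v. v < n \<and> bo v = i} \<union> {v. v < n \<and> bo v = 1}" using u by (simp add: i_def)
      ultimately show ?thesis by simp
    qed
    ultimately have "gdeg n E u = ns i + ns 1 - 1" by (simp add: gdeg_def)
    then show ?thesis using i ns1[of i] by (simp add: d_def i_def[symmetric])
  qed
  have dnn: "d i \<ge> 0" if "1 \<le> i" "i \<le> k" for i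
    using npos ns1[OF that] by (simp add: d_def)
  define b where "b = (\<lambda>u. bo u - 1)"
  define W where "W = (\<lambda>i j. if i = j \<or> i = 0 \<or> j = 0 then sqrt (d (Suc i)^2 + d (Suc j)^2) else (0::real))"
  define \<alpha> where "\<alpha> = (\<lambda>i. x + W i i)"
  define M where "M = sombor_matrix n E"
  have Mc: "M \<in> carrier_mat n n" by (simp add: M_def sombor_matrix_def)
  have Sb: "Suc (b u) = bo u" if "u < n" for u using R[OF that] by (simp add: b_def)
  have Ment: "M $$ (u,v) = (if u \<noteq> v then W (b u) (b v) else 0)" if "u < n" "v < n" for u v
  proof -
    have "M $$ (u,v) = (if E u v then sqrt (real (gdeg n E u)^2 + real (gdeg n E v)^2) else 0)"
      using that by (simp add: M_def sombor_matrix_def)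
    also have "\<dots> = (if E u v then sqrt (d (bo u)^2 + d (bo v)^2) else 0)"
      by (simp only: deg[OF that(1)] deg[OF that(2)])
    also have "\<dots> = (if u \<noteq> v then W (b u) (b v) else 0)"
    proof -
      have e1: "(b u = b v) = (bo u = bo v)" "(b u = 0) = (bo u = 1)" "(b v = 0) = (bo v = 1)"
        using R[OF that(1)] R[OF that(2)] by (auto simp: b_def)
      have w: "W (b u) (b v) = (if b u = b v \<or> b u = 0 \<or> b v = 0 then sqrt (d (Suc (b u))^2 + d (Suc (b v))^2) else 0)"
        by (simp only: W_def)
      show ?thesis
      proof (cases "u = v")
        case True
        have "\<not> E u v" using True Eiff[OF that] by simp
        then show ?thesis using True by simp
      next
        case False
        have "(if E u v then sqrt (d (bo u)^2 + d (bo v)^2) else 0) =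
          (if bo u = bo v \<or> bo u = 1 \<or> bo v = 1 then sqrt (d (bo u)^2 + d (bo v)^2) else 0)"
          using False by (simp only: Eiff[OF that] simp_thms)
        also have "\<dots> = W (b u) (b v)" unfolding w e1 Sb[OF that(1)] Sb[OF that(2)] ..
        finally show ?thesis using False by simp
      qed
    qed
    finally show ?thesis .
  qed
  have chiM: "chi M x = det (mat n n (\<lambda>(u,v). (if u = v then x else 0) - M $$ (u,v)))"
  proof -
    have "chi M x = det (- char_matrix M x)" by (simp add: chi_def char_poly_matrix[OF Mc])
    also have "- char_matrix M x = mat n n (\<lambda>(u,v). (if u = v then x else 0) - M $$ (u,v))"
      by (rule eq_matI) (use Mc in \<open>auto simp: char_matrix_def\<close>)
    finally show ?thesis .
  qed
  have Geq: "mat n n (\<lambda>(u,v). (if u = v then x else 0) - M $$ (u,v)) = gmat n b (\<lambda>_. 1) \<alpha> W"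
    by (rule eq_matI) (auto simp: gmat_def Ment \<alpha>_def)
  have mono: "\<forall>u v. u \<le> v \<longrightarrow> v < n \<longrightarrow> b u \<le> b v"
  proof (intro allI impI)
    fix u v assume uv: "u \<le> v" "v < n"
    have "bo u \<le> bo v"
    proof (rule ccontr)
      assume "\<not> bo u \<le> bo v"
      then have "off (Suc (bo v)) \<le> off (bo u)" unfolding off_def by (intro off_mono) simp
      with R[of u] R[of v] uv show False by simp
    qed
    then show "b u \<le> b v" by (simp add: b_def)
  qed
  have img: "b ` {..<n} = {..<k}"
  proof
    show "b ` {..<n} \<subseteq> {..<k}" using R by (force simp: b_def)
    show "{..<k} \<subseteq> b ` {..<n}"
    proof
      fix i assume i: "i \<in> {..<k}"
      have lt: "off (Suc i) < off (Suc (Suc i))" using ns1[of "Suc i"] i by (simp add: off_def off_Suc)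
      have un: "off (Suc i) < n" using lt offle[of "Suc i"] i by simp
      have "bo (off (Suc i)) = Suc i" using blk[OF un] lt by simp
      then show "i \<in> b ` {..<n}" using un by (intro image_eqI[of _ _ "off (Suc i)"]) (auto simp: b_def)
    qed
  qed
  have GD: "det (gmat n b (\<lambda>_. 1) \<alpha> W) = (\<Prod>i<k. \<alpha> i ^ (cnt n b i - 1)) * det (hmat k n b (\<lambda>_. 1) \<alpha> W)"
    by (rule gen_det[OF mono img])
  have cntv: "cnt n b i = ns (Suc i)" if "i < k" for i
  proof -
    have "cnt n b i = card {u. u < n \<and> b u = i}" by (simp add: cnt_def sum_if_card)
    also have "{u. u < n \<and> b u = i} = {u. u < n \<and> bo u = Suc i}"
    proof (rule Collect_cong)
      fix u show "(u < n \<and> b u = i) = (u < n \<and> bo u = Suc i)"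
        by (cases "u < n") (use R[of u] in \<open>auto simp: b_def\<close>)
    qed
    also have "card \<dots> = ns (Suc i)" using that by (intro cardblk) auto
    finally show ?thesis .
  qed
  have Sv: "(\<Sum>u<n. if b u = j then 1 else 0) = real (ns (Suc j))" if "j < k" for j
  proof -
    have "real (cnt n b j) = (\<Sum>u<n. if b u = j then 1 else 0)"
      unfolding cnt_def of_nat_sum by (rule sum.cong) auto
    then show ?thesis using cntv[OF that] by simp
  qed
  define \<beta> where "\<beta> = (\<lambda>i. x - (real (ns (Suc i)) - 1) * sqrt 2 * d (Suc i))"
  define r where "r = (\<lambda>j. - W 0 j * real (ns (Suc j)))"
  define c where "c = (\<lambda>i. - W i 0 * real (ns 1))"
  have Wii: "W i i = sqrt 2 * d (Suc i)" if "i < k" for i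
  proof -
    have "d (Suc i)^2 + d (Suc i)^2 = 2 * d (Suc i)^2" by simp
    then have "W i i = sqrt 2 * \<bar>d (Suc i)\<bar>" by (simp add: W_def real_sqrt_mult)
    then show ?thesis using dnn[of "Suc i"] that by simp
  qed
  have W0: "W i j = 0" if "i \<noteq> j" "i \<noteq> 0" "j \<noteq> 0" for i j using that by (simp add: W_def)
  have H: "hmat k n b (\<lambda>_. 1) \<alpha> W = arrow k \<beta> r c"
  proof (rule eq_matI)
    fix i j assume i: "i < dim_row (arrow k \<beta> r c)" and j: "j < dim_col (arrow k \<beta> r c)"
    then have ik: "i < k" and jk: "j < k" by (auto simp: arrow_def)
    show "hmat k n b (\<lambda>_. 1) \<alpha> W $$ (i, j) = arrow k \<beta> r c $$ (i, j)"
    proof -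
      have h: "hmat k n b (\<lambda>_. 1) \<alpha> W $$ (i, j) = (if i = j then \<alpha> i else 0) - W i j * real (ns (Suc j))"
        using ik jk by (simp add: hmat_def Sv)
      have a: "arrow k \<beta> r c $$ (i, j) = (if i = j then \<beta> i else if i = 0 then r j else if j = 0 then c i else 0)"
        using ik jk by (simp add: arrow_def)
      show ?thesis unfolding h a
        using ik jk by (cases "i = j"; cases "i = 0"; cases "j = 0") (auto simp: \<alpha>_def \<beta>_def r_def c_def Wii W0 algebra_simps)
    qed
  qed (auto simp: hmat_def arrow_def)
  have rc: "r j * c j = real (ns 1) * real (ns (Suc j)) * ((d 1)^2 + (d (Suc j))^2)" if "j \<in> {1..<k}" for j
  proof -
    have "W 0 j * W j 0 = (sqrt (d 1^2 + d (Suc j)^2))^2" by (simp add: W_def power2_eq_square add.commute)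
    also have "\<dots> = d 1^2 + d (Suc j)^2" by simp
    finally have WW: "W 0 j * W j 0 = d 1^2 + d (Suc j)^2" .
    have "r j * c j = (W 0 j * W j 0) * (real (ns 1) * real (ns (Suc j)))" by (simp add: r_def c_def mult_ac)
    then show ?thesis unfolding WW by (simp only: mult.commute)
  qed
  have A: "(\<Prod>i<k. \<alpha> i ^ (cnt n b i - 1)) = (\<Prod>i=1..k. (x + sqrt 2 * d i) ^ (ns i - 1))"
  proof -
    have "(\<Prod>i<k. \<alpha> i ^ (cnt n b i - 1)) = (\<Prod>i<k. (x + sqrt 2 * d (Suc i)) ^ (ns (Suc i) - 1))"
      by (rule prod.cong) (auto simp: \<alpha>_def Wii cntv)
    also have "\<dots> = (\<Prod>i=1..k. (x + sqrt 2 * d i) ^ (ns i - 1))"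
      using prod.atLeast1_atMost_eq[of "\<lambda>i. (x + sqrt 2 * d i) ^ (ns i - 1)" k] by simp
    finally show ?thesis .
  qed
  define f where "f = (\<lambda>i. x - (real (ns i) - 1) * sqrt 2 * d i)"
  have B: "(\<Prod>i<k. \<beta> i) = (\<Prod>i=1..k. f i)"
    using prod.atLeast1_atMost_eq[of f k] by (simp add: f_def \<beta>_def)
  have C: "(\<Sum>j\<in>{1..<k}. r j * c j * (\<Prod>i\<in>{1..<k}-{j}. \<beta> i)) =
     (\<Sum>j=2..k. real (ns 1) * real (ns j) * ((d 1)^2 + (d j)^2) * (\<Prod>i\<in>{2..k} - {j}. f i))"
  proof -
    have S: "Suc ` {1..<k} = {2..k}" by auto
    have "(\<Sum>j\<in>{1..<k}. r j * c j * (\<Prod>i\<in>{1..<k}-{j}. \<beta> i)) =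
       (\<Sum>j\<in>{1..<k}. real (ns 1) * real (ns (Suc j)) * ((d 1)^2 + (d (Suc j))^2) * (\<Prod>i\<in>{2..k}-{Suc j}. f i))"
    proof (rule sum.cong[OF refl])
      fix j assume j: "j \<in> {1..<k}"
      have "(\<Prod>i\<in>{1..<k}-{j}. \<beta> i) = (\<Prod>i\<in>Suc ` ({1..<k}-{j}). f i)"
        by (subst prod.reindex) (auto simp: \<beta>_def f_def)
      also have "Suc ` ({1..<k}-{j}) = {2..k}-{Suc j}"
      proof -
        have "Suc ` ({1..<k}-{j}) = Suc ` {1..<k} - Suc ` {j}" by (rule image_set_diff) (rule inj_Suc)
        then show ?thesis unfolding S by simp
      qed
      finally show "r j * c j * (\<Prod>i\<in>{1..<k}-{j}. \<beta> i) =
          real (ns 1) * real (ns (Suc j)) * ((d 1)^2 + (d (Suc j))^2) * (\<Prod>i\<in>{2..k}-{Suc j}. f i)"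
        using rc[OF j] by simp
    qed
    also have "\<dots> = (\<Sum>j\<in>Suc ` {1..<k}. real (ns 1) * real (ns j) * ((d 1)^2 + (d j)^2) * (\<Prod>i\<in>{2..k} - {j}. f i))"
      by (subst sum.reindex) auto
    finally show ?thesis unfolding S .
  qed
  have "chi (sombor_matrix n E) x = chi M x" by (simp only: M_def)
  also have "\<dots> = det (gmat n b (\<lambda>_. 1) \<alpha> W)" unfolding chiM Geq ..
  also have "\<dots> = (\<Prod>i<k. \<alpha> i ^ (cnt n b i - 1)) * det (arrow k \<beta> r c)" unfolding GD H ..
  also have "\<dots> = (\<Prod>i=1..k. (x + sqrt 2 * d i) ^ (ns i - 1)) * ((\<Prod>i=1..k. f i) -
      (\<Sum>j=2..k. real (ns 1) * real (ns j) * ((d 1)^2 + (d j)^2) * (\<Prod>i\<in>{2..k} - {j}. f i)))"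
    unfolding det_arrow A B C ..
  finally show ?thesis by (simp add: f_def)
qed

end
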